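(* Let $h$ be a probability density on $\mathbb{R}$ that is $(\alpha,\beta)$-admissible for functions $\alpha,\beta:(0,\infty)\to(0,\infty)$, let $\epsilon>0$, $k>0$, $l>0$, and set $\alpha'=\alpha(k\epsilon)$, $\beta'=\beta(l\epsilon)$. Let $u:D^n\times\mathcal{R}\to\mathbb{R}$ be a score function with finite candidate set $\mathcal{R}$, and let $S:D^n\times\mathcal{R}\to(0,\infty)$ be a $\beta'$-smooth upper bound on the local sensitivity of $u$. Consider the smooth private selection mechanism with $Z_r$ ($r\in\mathcal{R}$) i.i.d. with density $h$: $$M_{SPS}(x)=\operatorname{argmax}_{r\in\mathcal{R}}\Big\{u(x,r)+\frac{\max_{r'\in\mathcal{R}}S(x,r')}{\alpha'}\cdot Z_r\Big\}$$ (returning the first maximizer in a fixed ordering of $\mathcal{R}$ if there are several). Then $M_{SPS}$ is $\big((k+\tfrac{|\mathcal{R}|}{2}\, l)\,\epsilon\big)$-differentially private.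
   Context: $D^n$ denotes the set of datasets consisting of $n$ elements; Hamming distance $d(x,y)=|\{i:x_i\neq y_i\}|$; $x,y$ neighboring if $d(x,y)=1$. A randomized mechanism $M$ is $\epsilon$-differentially private if for all neighboring $x,y$ and all sets $\mathcal{S}$ of outputs, $\Pr[M(x)\in\mathcal{S}]\le e^{\epsilon}\Pr[M(y)\in\mathcal{S}]$. For a score function $u:D^n\times\mathcal{R}\to\mathbb{R}$, the local sensitivity at $x$ for $r$ is $LS_{u,\mathcal{R}}(x,r)=\max_{y:d(x,y)=1}|u(x,r)-u(y,r)|$. For $\beta>0$, $S:D^n\times\mathcal{R}\to\mathbb{R}$ is a $\beta$-smooth upper bound on the local sensitivity of $u$ if for every $r\in\mathcal{R}$: $S(x,r)\ge LS_{u,\mathcal{R}}(x,r)$ for all $x$, and $S(x,r)\le e^{\beta}S(y,r)$ for all $x,y$ with $d(x,y)=1$. Given functions $\alpha,\beta:(0,\infty)\to(0,\infty)$, a density $h$ on $\mathbb{R}$ is $(\alpha,\beta)$-admissible if for every $\epsilon>0$, every $\Delta\in\mathbb{R}$ with $|\Delta|\le\alpha(\epsilon)$, every $\lambda$ with $|\lambda|\le\beta(\epsilon)$ and every measurable $\mathcal{S}\subseteq\mathbb{R}$, with $Z\sim h$: $\Pr[Z\in\mathcal{S}]\le e^{\epsilon/2}\Pr[Z\in\mathcal{S}+\Delta]$ and $\Pr[Z\in\mathcal{S}]\le e^{\epsilon/2}\Pr[Z\in e^{\lambda}\mathcal{S}]$. *)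

theory Defs
  imports "HOL-Probability.Probability"
begin

text \<open>Datasets in D^n are lists of length n over a type 'd.\<close>

definition hamming :: "'d list \<Rightarrow> 'd list \<Rightarrow> nat" where
  "hamming x y = card {i. i < length x \<and> x ! i \<noteq> y ! i}"

definition neighboring :: "nat \<Rightarrow> 'd list \<Rightarrow> 'd list \<Rightarrow> bool" where
  "neighboring n x y \<longleftrightarrow> length x = n \<and> length y = n \<and> hamming x y = 1"

text \<open>A mechanism is given by its output distribution Pr[M(x) \<in> T], as a function
  of the dataset x and the output set T.\<close>
definition differentially_private ::
  "real \<Rightarrow> nat \<Rightarrow> ('d list \<Rightarrow> 'o set \<Rightarrow> real) \<Rightarrow> bool" where
  "differentially_private eps n Pr \<longleftrightarrow>
     (\<forall>x y T. neighboring n x y \<longrightarrow> Pr x T \<le> exp eps * Pr y T)"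

text \<open>S is a beta-smooth upper bound on the local sensitivity of u (datasets of length n,
  candidate set R).  "S(x,r) \<ge> LS(x,r)" is written as: S(x,r) bounds |u(x,r)-u(y,r)|
  for every neighbour y (i.e. S(x,r) is an upper bound of the set whose maximum is LS).\<close>
definition smooth_upper_bound ::
  "real \<Rightarrow> nat \<Rightarrow> 'r set \<Rightarrow> ('d list \<Rightarrow> 'r \<Rightarrow> real) \<Rightarrow> ('d list \<Rightarrow> 'r \<Rightarrow> real) \<Rightarrow> bool" where
  "smooth_upper_bound \<beta> n R u S \<longleftrightarrow>
     (\<forall>r\<in>R. (\<forall>x y. neighboring n x y \<longrightarrow> \<bar>u x r - u y r\<bar> \<le> S x r) \<and>
             (\<forall>x y. neighboring n x y \<longrightarrow> S x r \<le> exp \<beta> * S y r))"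

definition prob_density :: "(real \<Rightarrow> real) \<Rightarrow> bool" where
  "prob_density h \<longleftrightarrow> h \<in> borel_measurable borel \<and> (\<forall>t. 0 \<le> h t) \<and>
     (\<integral>\<^sup>+ t. ennreal (h t) \<partial>lborel) = 1"

definition admissible :: "(real \<Rightarrow> real) \<Rightarrow> (real \<Rightarrow> real) \<Rightarrow> (real \<Rightarrow> real) \<Rightarrow> bool" where
  "admissible \<alpha> \<beta> h \<longleftrightarrow>
     (\<forall>eps>0. \<forall>\<Delta> lam A. \<bar>\<Delta>\<bar> \<le> \<alpha> eps \<longrightarrow> \<bar>lam\<bar> \<le> \<beta> eps \<longrightarrow> A \<in> sets borel \<longrightarrow>
        measure (density lborel h) A \<le> exp (eps/2) * measure (density lborel h) ((\<lambda>s. s + \<Delta>) ` A) \<and>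
        measure (density lborel h) A \<le> exp (eps/2) * measure (density lborel h) ((\<lambda>s. exp lam * s) ` A))"

text \<open>Smooth private selection: the candidate set R is given as a list rs of distinct
  candidates (its order is the fixed tie-breaking order); z is the noise vector (Z_r).\<close>
definition sps_select ::
  "('d list \<Rightarrow> 'r \<Rightarrow> real) \<Rightarrow> ('d list \<Rightarrow> 'r \<Rightarrow> real) \<Rightarrow> 'r list \<Rightarrow> real \<Rightarrow> 'd list \<Rightarrow> ('r \<Rightarrow> real) \<Rightarrow> 'r" where
  "sps_select u S rs a x z =
     (let score = (\<lambda>r. u x r + Max (S x ` set rs) / a * z r)
      in the (find (\<lambda>r. \<forall>r'\<in>set rs. score r' \<le> score r) rs))"

definition sps_prob ::
  "(real \<Rightarrow> real) \<Rightarrow> ('d list \<Rightarrow> 'r \<Rightarrow> real) \<Rightarrow> ('d list \<Rightarrow> 'r \<Rightarrow> real) \<Rightarrow> 'r list \<Rightarrow> real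
     \<Rightarrow> 'd list \<Rightarrow> 'r set \<Rightarrow> real" where
  "sps_prob h u S rs a x T =
     (let P = PiM (set rs) (\<lambda>_. density lborel h)
      in measure P {z \<in> space P. sps_select u S rs a x z \<in> T})"

end

theory Submission
  imports Defs
begin

lemma nn_dom:
  fixes \<mu> \<nu> :: "real measure" and c :: ennreal
  assumes "sets \<mu> = sets borel" "sets \<nu> = sets borel"
    and dom: "\<And>A. A \<in> sets borel \<Longrightarrow> emeasure \<mu> A \<le> c * emeasure \<nu> A"
    and g: "g \<in> borel_measurable borel"
  shows "(\<integral>\<^sup>+x. g x \<partial>\<mu>) \<le> c * (\<integral>\<^sup>+x. g x \<partial>\<nu>)"
proof -
  have sp: "space \<mu> = space \<nu>" using sets_eq_imp_space_eq[OF assms(1)] sets_eq_imp_space_eq[OF assms(2)] by simp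
  have ssp: "space (scale_measure c \<nu>) = space \<nu>" by (rule sets_eq_imp_space_eq) simp
  have em: "emeasure \<mu> X \<le> c * emeasure \<nu> X" for X
  proof (cases "X \<in> sets borel")
    case True then show ?thesis by (rule dom)
  next
    case False then show ?thesis using assms(1) by (simp add: emeasure_notin_sets)
  qed
  have "\<mu> \<le> scale_measure c \<nu>"
    unfolding le_measure_iff using assms sp ssp em
    by (simp add: le_fun_def)
  then have "(\<integral>\<^sup>+x. g x \<partial>\<mu>) \<le> (\<integral>\<^sup>+x. g x \<partial>scale_measure c \<nu>)"
    by (intro nn_integral_mono_measure) (simp add: assms)
  also have "\<dots> = c * (\<integral>\<^sup>+x. g x \<partial>\<nu>)"
    using g by (intro nn_integral_scale_measure) (simp add: measurable_cong_sets[OF assms(2) refl])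
  finally show ?thesis .
qed

lemma pi_dom:
  fixes \<mu> \<nu> :: "real measure" and c :: ennreal
  assumes P: "prob_space \<mu>" "prob_space \<nu>" and S: "sets \<mu> = sets borel" "sets \<nu> = sets borel"
    and dom: "\<And>A. A \<in> sets borel \<Longrightarrow> emeasure \<mu> A \<le> c * emeasure \<nu> A"
    and "finite I"
  shows "f \<in> borel_measurable (PiM I (\<lambda>_. \<mu>)) \<Longrightarrow>
     (\<integral>\<^sup>+x. f x \<partial>PiM I (\<lambda>_. \<mu>)) \<le> c ^ card I * (\<integral>\<^sup>+x. f x \<partial>PiM I (\<lambda>_. \<nu>))"
  using \<open>finite I\<close>
proof (induction I arbitrary: f rule: finite_induct)
  case empty
  then show ?case by (simp add: PiM_empty)
next
  case (insert i I)
  interpret M: product_prob_space "\<lambda>_. \<mu>" by (intro product_prob_spaceI) (simp add: P)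
  interpret N: product_prob_space "\<lambda>_. \<nu>" by (intro product_prob_spaceI) (simp add: P)
  have setsI: "sets (PiM J (\<lambda>_. \<mu>)) = sets (PiM J (\<lambda>_. \<nu>))" for J
    by (intro sets_PiM_cong) (simp_all add: S)
  have fm[measurable]: "f \<in> borel_measurable (PiM (insert i I) (\<lambda>_. \<mu>))" by fact
  have fn: "f \<in> borel_measurable (PiM (insert i I) (\<lambda>_. \<nu>))"
    using fm by (simp add: measurable_cong_sets[OF setsI refl])
  interpret Pn: prob_space \<nu> by (rule P)
  have fn'[measurable]: "f \<in> borel_measurable (PiM (insert i I) (\<lambda>_. \<nu>))" by (rule fn)
  have gm0: "(\<lambda>x. \<integral>\<^sup>+ y. f (x(i := y)) \<partial>\<nu>) \<in> borel_measurable (Pi\<^sub>M I (\<lambda>_. \<nu>))"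
    by measurable
  then have gm: "(\<lambda>x. \<integral>\<^sup>+ y. f (x(i := y)) \<partial>\<nu>) \<in> borel_measurable (Pi\<^sub>M I (\<lambda>_. \<mu>))"
    by (simp add: measurable_cong_sets[OF setsI refl])
  have "(\<integral>\<^sup>+x. f x \<partial>PiM (insert i I) (\<lambda>_. \<mu>)) = (\<integral>\<^sup>+ x. (\<integral>\<^sup>+ y. f (x(i := y)) \<partial>\<mu>) \<partial>(Pi\<^sub>M I (\<lambda>_. \<mu>)))"
    by (rule M.product_nn_integral_insert[OF insert(1,2) fm])
  also have "\<dots> \<le> (\<integral>\<^sup>+ x. c * (\<integral>\<^sup>+ y. f (x(i := y)) \<partial>\<nu>) \<partial>(Pi\<^sub>M I (\<lambda>_. \<mu>)))"
  proof (intro nn_integral_mono nn_dom[OF S dom])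
    fix x y assume "x \<in> space (Pi\<^sub>M I (\<lambda>_. \<mu>))"
    then have "(\<lambda>y. f (x(i := y))) \<in> borel_measurable \<mu>"
      by measurable
    then show "(\<lambda>y. f (x(i := y))) \<in> borel_measurable borel"
      by (simp add: measurable_cong_sets[OF S(1) refl])
  qed
  also have "\<dots> = c * (\<integral>\<^sup>+ x. (\<integral>\<^sup>+ y. f (x(i := y)) \<partial>\<nu>) \<partial>(Pi\<^sub>M I (\<lambda>_. \<mu>)))"
    by (rule nn_integral_cmult[OF gm])
  also have "\<dots> \<le> c * (c ^ card I * (\<integral>\<^sup>+ x. (\<integral>\<^sup>+ y. f (x(i := y)) \<partial>\<nu>) \<partial>(Pi\<^sub>M I (\<lambda>_. \<nu>))))"
    by (intro mult_left_mono insert.IH gm) simp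
  also have "\<dots> = c * (c ^ card I * (\<integral>\<^sup>+x. f x \<partial>PiM (insert i I) (\<lambda>_. \<nu>)))"
    by (simp only: N.product_nn_integral_insert[OF insert(1,2) fn])
  also have "\<dots> = c ^ card (insert i I) * (\<integral>\<^sup>+x. f x \<partial>PiM (insert i I) (\<lambda>_. \<nu>))"
    using insert(1,2) by (simp add: mult.assoc)
  finally show ?case .
qed

lemma scale_dom:
  fixes \<mu> :: "real measure" and c :: ennreal
  assumes P: "prob_space \<mu>" and S: "sets \<mu> = sets borel"
    and g: "g \<in> borel_measurable borel"
    and dom: "\<And>A. A \<in> sets borel \<Longrightarrow> emeasure \<mu> A \<le> c * emeasure \<mu> (g -` A)"
    and I: "finite I" and E: "E \<in> sets (PiM I (\<lambda>_. \<mu>))"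
  shows "emeasure (PiM I (\<lambda>_. \<mu>)) E \<le> c ^ card I *
     emeasure (PiM I (\<lambda>_. \<mu>)) {z \<in> space (PiM I (\<lambda>_. \<mu>)). compose I g z \<in> E}"
proof -
  interpret M: product_prob_space "\<lambda>_. \<mu>" by (intro product_prob_spaceI) (simp add: P)
  have spU: "space \<mu> = UNIV" using sets_eq_imp_space_eq[OF S] by simp
  have gmu: "g \<in> measurable \<mu> \<mu>"
    using g by (simp add: measurable_cong_sets[OF S S])
  define \<nu> where "\<nu> = distr \<mu> \<mu> g"
  have Pn: "prob_space \<nu>" unfolding \<nu>_def using P gmu by (simp add: prob_space.prob_space_distr)
  have Sn: "sets \<nu> = sets borel" unfolding \<nu>_def using S by simp
  have domn: "emeasure \<mu> A \<le> c * emeasure \<nu> A" if "A \<in> sets borel" for A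
  proof -
    have "emeasure \<nu> A = emeasure \<mu> (g -` A \<inter> space \<mu>)"
      unfolding \<nu>_def using that S gmu by (simp add: emeasure_distr)
    then show ?thesis using dom[OF that] spU by simp
  qed
  have cm: "compose I g \<in> measurable (PiM I (\<lambda>_. \<mu>)) (PiM I (\<lambda>_. \<mu>))"
    unfolding compose_def using gmu by measurable
  have eqd: "distr (PiM I (\<lambda>_. \<mu>)) (PiM I (\<lambda>_. \<mu>)) (compose I g) = PiM I (\<lambda>_. \<nu>)"
    unfolding \<nu>_def
    by (rule distr_PiM_finite_prob_space[OF I]) (auto intro: product_prob_spaceI P gmu)
  have setsI: "sets (PiM I (\<lambda>_. \<mu>)) = sets (PiM I (\<lambda>_. \<nu>))"
    by (intro sets_PiM_cong) (simp_all add: S Sn)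
  have "emeasure (PiM I (\<lambda>_. \<mu>)) E = (\<integral>\<^sup>+x. indicator E x \<partial>PiM I (\<lambda>_. \<mu>))"
    using E by simp
  also have "\<dots> \<le> c ^ card I * (\<integral>\<^sup>+x. indicator E x \<partial>PiM I (\<lambda>_. \<nu>))"
    using pi_dom[OF P Pn S Sn domn I borel_measurable_indicator[OF E]] .
  also have "(\<integral>\<^sup>+x. indicator E x \<partial>PiM I (\<lambda>_. \<nu>)) = emeasure (PiM I (\<lambda>_. \<nu>)) E"
    using E setsI by simp
  also have "\<dots> = emeasure (PiM I (\<lambda>_. \<mu>)) (compose I g -` E \<inter> space (PiM I (\<lambda>_. \<mu>)))"
    unfolding eqd[symmetric] using E cm by (simp add: emeasure_distr)
  also have "compose I g -` E \<inter> space (PiM I (\<lambda>_. \<mu>)) = {z \<in> space (PiM I (\<lambda>_. \<mu>)). compose I g z \<in> E}"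
    by auto
  finally show ?thesis by simp
qed

definition Fsel :: "'r list \<Rightarrow> ('r \<Rightarrow> real) \<Rightarrow> ('r \<Rightarrow> real) \<Rightarrow> 'r" where
  "Fsel rs v z = the (find (\<lambda>r. \<forall>r'\<in>set rs. v r' + z r' \<le> v r + z r) rs)"

definition Fcond :: "'r list \<Rightarrow> ('r \<Rightarrow> real) \<Rightarrow> 'r \<Rightarrow> ('r \<Rightarrow> real) \<Rightarrow> bool" where
  "Fcond rs v r z \<longleftrightarrow> r \<in> set rs \<and> (\<forall>r'\<in>set rs. v r' + z r' \<le> v r + z r) \<and>
     (\<forall>r'\<in>set (takeWhile (\<lambda>x. x \<noteq> r) rs). v r' + z r' < v r + z r)"

lemma find_tw: "find P xs = Some r \<longleftrightarrow> r \<in> set xs \<and> P r \<and> (\<forall>x\<in>set (takeWhile (\<lambda>x. x \<noteq> r) xs). \<not> P x)"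
  by (induction xs) auto

lemma Fsel_iff:
  assumes "rs \<noteq> []"
  shows "Fsel rs v z = r \<longleftrightarrow> Fcond rs v r z"
proof -
  let ?f = "\<lambda>r. v r + z r"
  let ?P = "\<lambda>r. \<forall>r'\<in>set rs. ?f r' \<le> ?f r"
  have fin: "finite (?f ` set rs)" "?f ` set rs \<noteq> {}" using assms by auto
  obtain m where m: "m \<in> set rs" "?f m = Max (?f ` set rs)" using Max_in[OF fin] by auto
  have "?P m" using m fin by (auto intro: Max_ge)
  then have "find ?P rs \<noteq> None" using m by (auto simp: find_None_iff)
  then obtain r0 where r0: "find ?P rs = Some r0" by auto
  have "Fsel rs v z = r \<longleftrightarrow> find ?P rs = Some r" unfolding Fsel_def using r0 by auto
  also have "\<dots> \<longleftrightarrow> Fcond rs v r z"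
    unfolding find_tw Fcond_def
  proof (intro iffI; elim conjE; intro conjI ballI)
    fix x assume h: "r \<in> set rs" "\<forall>r'\<in>set rs. ?f r' \<le> ?f r"
      "\<forall>x\<in>set (takeWhile (\<lambda>x. x \<noteq> r) rs). \<not> ?P x" "x \<in> set (takeWhile (\<lambda>x. x \<noteq> r) rs)"
    then obtain r' where "r' \<in> set rs" "?f x < ?f r'" by (auto simp: not_le)
    then show "?f x < ?f r" using h(2) by force
  next
    fix x assume h: "r \<in> set rs" "\<forall>r'\<in>set rs. ?f r' \<le> ?f r"
      "\<forall>x\<in>set (takeWhile (\<lambda>x. x \<noteq> r) rs). ?f x < ?f r" "x \<in> set (takeWhile (\<lambda>x. x \<noteq> r) rs)"
    then show "\<not> ?P x" by force
  qed auto
  finally show ?thesis .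
qed

lemma Fsel_in: "rs \<noteq> [] \<Longrightarrow> Fsel rs v z \<in> set rs"
  using Fsel_iff[of rs v z "Fsel rs v z"] by (simp add: Fcond_def)

lemma Fsel_cong: "(\<And>r. r \<in> set rs \<Longrightarrow> z r = z' r) \<Longrightarrow> Fsel rs v z = Fsel rs v z'"
  unfolding Fsel_def by (intro arg_cong[where f=the] find_cong) auto

lemma Fsel_scale:
  fixes cx cy :: real
  assumes "cx > 0"
  shows "the (find (\<lambda>r. \<forall>r'\<in>set rs. p r' + cy * z r' \<le> p r + cy * z r) rs)
       = Fsel rs (\<lambda>r. p r / cx) (\<lambda>r. cy / cx * z r)"
proof -
  have "(p r' + cy * z r' \<le> p r + cy * z r) \<longleftrightarrow> (p r' / cx + cy / cx * z r' \<le> p r / cx + cy / cx * z r)" for r r'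
  proof -
    have "(p r' / cx + cy / cx * z r' \<le> p r / cx + cy / cx * z r) \<longleftrightarrow>
          ((p r' + cy * z r') / cx \<le> (p r + cy * z r) / cx)"
      by (simp add: add_divide_distrib)
    also have "\<dots> \<longleftrightarrow> (p r' + cy * z r' \<le> p r + cy * z r)" using assms by (simp add: divide_le_cancel)
    finally show ?thesis by simp
  qed
  then show ?thesis unfolding Fsel_def by simp
qed

lemma shift_one:
  fixes \<mu> :: "real measure" and c :: ennreal and d :: real
  assumes P: "prob_space \<mu>" and S: "sets \<mu> = sets borel"
    and dom: "\<And>A. A \<in> sets borel \<Longrightarrow> emeasure \<mu> A \<le> c * emeasure \<mu> {s. s - d \<in> A}"
    and ne: "rs \<noteq> []" and r: "r \<in> set rs" and ab: "\<And>j. j \<in> set rs \<Longrightarrow> \<bar>a j - b j\<bar> \<le> d"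
  shows "emeasure (PiM (set rs) (\<lambda>_. \<mu>)) {z \<in> space (PiM (set rs) (\<lambda>_. \<mu>)). Fsel rs a z = r}
       \<le> c^2 * emeasure (PiM (set rs) (\<lambda>_. \<mu>)) {z \<in> space (PiM (set rs) (\<lambda>_. \<mu>)). Fsel rs b z = r}"
proof -
  interpret M: product_prob_space "\<lambda>_. \<mu>" by (intro product_prob_spaceI) (simp add: P)
  interpret Pm: prob_space \<mu> by (rule P)
  define R where "R = set rs"
  define R0 where "R0 = R - {r}"
  define B where "B = set (takeWhile (\<lambda>x. x \<noteq> r) rs)"
  have RR: "insert r R0 = R" and r0: "r \<notin> R0" and finR0: "finite R0"
    using r by (auto simp: R0_def R_def)
  have BR: "B \<subseteq> R" unfolding B_def R_def by (auto dest: set_takeWhileD)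
  define C where "C v z = ((\<forall>r'\<in>R. v r' + z r' \<le> v r + (z r::real)) \<and> (\<forall>r'\<in>B. v r' + z r' < v r + z r))" for v z
  have E_eq: "{z \<in> space (PiM R (\<lambda>_. \<mu>)). Fsel rs v z = r} = {z \<in> space (PiM R (\<lambda>_. \<mu>)). C v z}" for v
    using r by (auto simp: Fsel_iff[OF ne] Fcond_def C_def R_def B_def)
  have spU: "space \<mu> = UNIV" using sets_eq_imp_space_eq[OF S] by simp
  have comp[measurable]: "(\<lambda>z. z i) \<in> borel_measurable (PiM R (\<lambda>_. \<mu>))" for i
  proof (cases "i \<in> R")
    case True
    then have "(\<lambda>z. z i) \<in> measurable (PiM R (\<lambda>_. \<mu>)) \<mu>" by simp
    then show ?thesis by (simp add: measurable_cong_sets[OF refl S])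
  next
    case False
    have eq: "(\<lambda>z. z i) = (\<lambda>z. undefined) \<Longrightarrow> False \<or> True" by simp
    have "\<forall>z\<in>space (PiM R (\<lambda>_. \<mu>)). z i = undefined"
      using False by (auto simp: space_PiM PiE_iff extensional_def)
    then show ?thesis
      by (subst measurable_cong[where g="\<lambda>z. undefined"]) auto
  qed
  have finR: "finite R" "finite B" by (auto simp: R_def B_def)
  have Emeas: "{z \<in> space (PiM R (\<lambda>_. \<mu>)). C v z} \<in> sets (PiM R (\<lambda>_. \<mu>))" for v
  proof -
    have p1: "Measurable.pred (PiM R (\<lambda>_. \<mu>)) (\<lambda>x. v r' + x r' \<le> v r + x r)" for r'
    proof -
      have "Measurable.pred (PiM R (\<lambda>_. \<mu>)) (\<lambda>x. \<not> (v r + x r < v r' + x r'))"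
        using comp[of r'] comp[of r] by measurable
      then show ?thesis by (simp add: not_less)
    qed
    have p2: "Measurable.pred (PiM R (\<lambda>_. \<mu>)) (\<lambda>x. v r' + x r' < v r + x r)" for r'
      using comp[of r'] comp[of r] by measurable
    have "Measurable.pred (PiM R (\<lambda>_. \<mu>)) (C v)"
      unfolding C_def using finR by (intro pred_intros_logic pred_intros_finite p1 p2)
    then show ?thesis by (simp add: pred_def)
  qed
  define H where "H v w t = {s. C v (w(r := s + t))}" for v w t
  have Hmeas: "H v w t \<in> sets borel" for v w t
    unfolding H_def C_def fun_upd_def using finR by measurable
  have Hshift: "{s. s - d \<in> H v w t} = H v w (t - d)" for v w t
    by (simp add: H_def algebra_simps)
  have Hsub: "H a w (- d - d) \<subseteq> H b w 0" for w
  proof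
    fix s assume "s \<in> H a w (- d - d)"
    then have h: "C a (w(r := s + (- d - d)))" by (simp add: H_def)
    have rR: "r \<in> R" using r by (simp add: R_def)
    have dr: "\<bar>a r - b r\<bar> \<le> d" using ab r by simp
    have "\<forall>r'\<in>R. b r' + (w(r := s)) r' \<le> b r + (w(r := s)) r"
    proof
      fix r' assume r': "r' \<in> R"
      have d': "\<bar>a r' - b r'\<bar> \<le> d" using ab r' by (simp add: R_def)
      show "b r' + (w(r := s)) r' \<le> b r + (w(r := s)) r"
      proof (cases "r' = r")
        case False
        have "a r' + (w(r := s + (- d - d))) r' \<le> a r + (w(r := s + (- d - d))) r"
          using h r' unfolding C_def by blast
        then have "a r' + w r' \<le> a r + (s - d - d)" using False by simp
        then show ?thesis using False d' dr by simp
      qed simp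
    qed
    moreover have "\<forall>r'\<in>B. b r' + (w(r := s)) r' < b r + (w(r := s)) r"
    proof
      fix r' assume r': "r' \<in> B"
      have d': "\<bar>a r' - b r'\<bar> \<le> d" using ab r' BR by (auto simp: R_def)
      have "a r' + (w(r := s + (- d - d))) r' < a r + (w(r := s + (- d - d))) r"
        using h r' unfolding C_def by blast
      then show "b r' + (w(r := s)) r' < b r + (w(r := s)) r"
        using d' dr by (cases "r' = r") auto
    qed
    ultimately show "s \<in> H b w 0" by (simp add: H_def C_def)
  qed
  have pw: "emeasure \<mu> (H a w 0) \<le> c^2 * emeasure \<mu> (H b w 0)" for w
  proof -
    have "emeasure \<mu> (H a w 0) \<le> c * emeasure \<mu> (H a w (0 - d))"
      using dom[OF Hmeas, of a w 0] Hshift[of a w 0] by simp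
    also have "\<dots> \<le> c * (c * emeasure \<mu> (H a w (0 - d - d)))"
      using dom[OF Hmeas, of a w "0 - d"] Hshift by (intro mult_left_mono) simp_all
    also have "\<dots> \<le> c * (c * emeasure \<mu> (H b w 0))"
      using Hsub[of w] Hmeas S by (intro mult_left_mono emeasure_mono) simp_all
    finally show ?thesis by (simp add: power2_eq_square mult.assoc)
  qed
  have ind: "(\<integral>\<^sup>+s. indicator {z \<in> space (PiM R (\<lambda>_. \<mu>)). C v z} (w(r := s)) \<partial>\<mu>) = emeasure \<mu> (H v w 0)"
    if w: "w \<in> space (PiM R0 (\<lambda>_. \<mu>))" for v w
  proof -
    have "w(r := s) \<in> space (PiM R (\<lambda>_. \<mu>))" for s
      using w RR spU by (auto simp: space_PiM PiE_iff extensional_def)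
    then have eq: "indicator {z \<in> space (PiM R (\<lambda>_. \<mu>)). C v z} (w(r := s)) = indicator (H v w 0) s" for s
      by (simp add: indicator_def H_def)
    have "(\<integral>\<^sup>+s. indicator {z \<in> space (PiM R (\<lambda>_. \<mu>)). C v z} (w(r := s)) \<partial>\<mu>) = (\<integral>\<^sup>+s. indicator (H v w 0) s \<partial>\<mu>)"
      by (simp only: eq)
    also have "\<dots> = emeasure \<mu> (H v w 0)"
      by (rule nn_integral_indicator) (simp add: S Hmeas)
    finally show ?thesis .
  qed
  have emI: "emeasure (PiM R (\<lambda>_. \<mu>)) {z \<in> space (PiM R (\<lambda>_. \<mu>)). C v z} =
    (\<integral>\<^sup>+w. (\<integral>\<^sup>+s. indicator {z \<in> space (PiM R (\<lambda>_. \<mu>)). C v z} (w(r := s)) \<partial>\<mu>) \<partial>PiM R0 (\<lambda>_. \<mu>))" for v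
  proof -
    have "emeasure (PiM R (\<lambda>_. \<mu>)) {z \<in> space (PiM R (\<lambda>_. \<mu>)). C v z} =
      (\<integral>\<^sup>+z. indicator {z \<in> space (PiM R (\<lambda>_. \<mu>)). C v z} z \<partial>PiM (insert r R0) (\<lambda>_. \<mu>))"
      using Emeas RR by simp
    also have "\<dots> = (\<integral>\<^sup>+w. (\<integral>\<^sup>+s. indicator {z \<in> space (PiM R (\<lambda>_. \<mu>)). C v z} (w(r := s)) \<partial>\<mu>) \<partial>PiM R0 (\<lambda>_. \<mu>))"
      by (rule M.product_nn_integral_insert[OF finR0 r0]) (use Emeas RR in simp)
    finally show ?thesis .
  qed
  have gm: "(\<lambda>w. \<integral>\<^sup>+s. indicator {z \<in> space (PiM R (\<lambda>_. \<mu>)). C v z} (w(r := s)) \<partial>\<mu>) \<in> borel_measurable (PiM R0 (\<lambda>_. \<mu>))" for v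
  proof -
    have [measurable]: "{z \<in> space (PiM (insert r R0) (\<lambda>_. \<mu>)). C v z} \<in> sets (PiM (insert r R0) (\<lambda>_. \<mu>))"
      using Emeas RR by simp
    show ?thesis using RR[symmetric] by simp measurable
  qed
  have "emeasure (PiM R (\<lambda>_. \<mu>)) {z \<in> space (PiM R (\<lambda>_. \<mu>)). C a z}
     \<le> (\<integral>\<^sup>+w. c^2 * (\<integral>\<^sup>+s. indicator {z \<in> space (PiM R (\<lambda>_. \<mu>)). C b z} (w(r := s)) \<partial>\<mu>) \<partial>PiM R0 (\<lambda>_. \<mu>))"
    unfolding emI by (intro nn_integral_mono) (simp add: ind pw)
  also have "\<dots> = c^2 * emeasure (PiM R (\<lambda>_. \<mu>)) {z \<in> space (PiM R (\<lambda>_. \<mu>)). C b z}"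
    unfolding emI by (rule nn_integral_cmult[OF gm])
  finally show ?thesis using E_eq unfolding R_def by simp
qed

lemma Fsel_meas:
  fixes \<mu> :: "real measure"
  assumes S: "sets \<mu> = sets borel" and ne: "rs \<noteq> []"
  shows "{z \<in> space (PiM (set rs) (\<lambda>_. \<mu>)). Fsel rs v z = r} \<in> sets (PiM (set rs) (\<lambda>_. \<mu>))"
proof (cases "r \<in> set rs")
  case False
  then have "{z \<in> space (PiM (set rs) (\<lambda>_. \<mu>)). Fsel rs v z = r} = {}"
    using Fsel_in[OF ne] by blast
  then show ?thesis by (simp only: sets.empty_sets)
next
  case True
  define R where "R = set rs"
  define B where "B = set (takeWhile (\<lambda>x. x \<noteq> r) rs)"
  define C where "C v z = ((\<forall>r'\<in>R. v r' + z r' \<le> v r + (z r::real)) \<and> (\<forall>r'\<in>B. v r' + z r' < v r + z r))" for v z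
  have E_eq: "{z \<in> space (PiM R (\<lambda>_. \<mu>)). Fsel rs v z = r} = {z \<in> space (PiM R (\<lambda>_. \<mu>)). C v z}"
    using True by (auto simp: Fsel_iff[OF ne] Fcond_def C_def R_def B_def)
  have comp: "(\<lambda>z. z i) \<in> borel_measurable (PiM R (\<lambda>_. \<mu>))" for i
  proof (cases "i \<in> R")
    case True
    then have "(\<lambda>z. z i) \<in> measurable (PiM R (\<lambda>_. \<mu>)) \<mu>" by simp
    then show ?thesis by (simp add: measurable_cong_sets[OF refl S])
  next
    case False
    have "\<forall>z\<in>space (PiM R (\<lambda>_. \<mu>)). z i = undefined"
      using False by (auto simp: space_PiM PiE_iff extensional_def)
    then show ?thesis
      by (subst measurable_cong[where g="\<lambda>z. undefined"]) auto
  qed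
  have finR: "finite R" "finite B" by (auto simp: R_def B_def)
  have p1: "Measurable.pred (PiM R (\<lambda>_. \<mu>)) (\<lambda>x. v r' + x r' \<le> v r + x r)" for r'
  proof -
    have "Measurable.pred (PiM R (\<lambda>_. \<mu>)) (\<lambda>x. \<not> (v r + x r < v r' + x r'))"
      using comp[of r'] comp[of r] by measurable
    then show ?thesis by (simp add: not_less)
  qed
  have p2: "Measurable.pred (PiM R (\<lambda>_. \<mu>)) (\<lambda>x. v r' + x r' < v r + x r)" for r'
    using comp[of r'] comp[of r] by measurable
  have "Measurable.pred (PiM R (\<lambda>_. \<mu>)) (C v)"
    unfolding C_def using finR by (intro pred_intros_logic pred_intros_finite p1 p2)
  then show ?thesis using E_eq by (simp add: pred_def R_def)
qed

lemma Fsel_T: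
  assumes ne: "rs \<noteq> []"
  shows "{z \<in> space M. Fsel rs v z \<in> T} = (\<Union>r\<in>set rs \<inter> T. {z \<in> space M. Fsel rs v z = r})"
  using Fsel_in[OF ne] by auto

lemma Fsel_T_meas:
  fixes \<mu> :: "real measure"
  assumes S: "sets \<mu> = sets borel" and ne: "rs \<noteq> []"
  shows "{z \<in> space (PiM (set rs) (\<lambda>_. \<mu>)). Fsel rs v z \<in> T} \<in> sets (PiM (set rs) (\<lambda>_. \<mu>))"
  unfolding Fsel_T[OF ne] using Fsel_meas[OF S ne] by (intro sets.finite_UN) auto

lemma shift_T:
  fixes \<mu> :: "real measure" and c :: ennreal and d :: real
  assumes P: "prob_space \<mu>" and S: "sets \<mu> = sets borel"
    and dom: "\<And>A. A \<in> sets borel \<Longrightarrow> emeasure \<mu> A \<le> c * emeasure \<mu> {s. s - d \<in> A}"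
    and ne: "rs \<noteq> []" and ab: "\<And>j. j \<in> set rs \<Longrightarrow> \<bar>a j - b j\<bar> \<le> d"
  shows "emeasure (PiM (set rs) (\<lambda>_. \<mu>)) {z \<in> space (PiM (set rs) (\<lambda>_. \<mu>)). Fsel rs a z \<in> T}
       \<le> c^2 * emeasure (PiM (set rs) (\<lambda>_. \<mu>)) {z \<in> space (PiM (set rs) (\<lambda>_. \<mu>)). Fsel rs b z \<in> T}"
proof -
  let ?M = "PiM (set rs) (\<lambda>_. \<mu>)"
  let ?F = "\<lambda>v r. {z \<in> space ?M. Fsel rs v z = r}"
  have sm: "emeasure ?M {z \<in> space ?M. Fsel rs v z \<in> T} = (\<Sum>r\<in>set rs \<inter> T. emeasure ?M (?F v r))" for v
    unfolding Fsel_T[OF ne]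
    by (rule sum_emeasure[symmetric]) (auto simp: disjoint_family_on_def intro: Fsel_meas[OF S ne])
  have "(\<Sum>r\<in>set rs \<inter> T. emeasure ?M (?F a r)) \<le> (\<Sum>r\<in>set rs \<inter> T. c^2 * emeasure ?M (?F b r))"
    by (intro sum_mono shift_one[OF P S dom ne _ ab]) auto
  also have "\<dots> = c^2 * (\<Sum>r\<in>set rs \<inter> T. emeasure ?M (?F b r))"
    by (simp add: sum_distrib_left)
  finally show ?thesis unfolding sm .
qed

theorem theorem2:
  fixes h :: "real \<Rightarrow> real" and \<alpha> \<beta> :: "real \<Rightarrow> real"
    and eps k l :: real and n :: nat
    and u S :: "'d list \<Rightarrow> 'r \<Rightarrow> real" and rs :: "'r list"
  assumes "prob_density h"
    and "\<forall>t>0. \<alpha> t > 0" and "\<forall>t>0. \<beta> t > 0"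
    and "admissible \<alpha> \<beta> h"
    and "eps > 0" and "k > 0" and "l > 0"
    and "distinct rs" and "rs \<noteq> []"
    and "\<forall>x r. length x = n \<longrightarrow> r \<in> set rs \<longrightarrow> S x r > 0"
    and "smooth_upper_bound (\<beta> (l * eps)) n (set rs) u S"
  shows "differentially_private ((k + real (length rs) / 2 * l) * eps) n
           (sps_prob h u S rs (\<alpha> (k * eps)))"
proof -
  note ne = assms(9)
  define \<mu> where "\<mu> = density lborel (\<lambda>t. ennreal (h t))"
  define R where "R = set rs"
  define PM where "PM = PiM R (\<lambda>_. \<mu>)"
  have hm: "h \<in> borel_measurable borel" and h1: "(\<integral>\<^sup>+ t. ennreal (h t) \<partial>lborel) = 1"
    using assms(1) by (auto simp: prob_density_def)
  have hm': "(\<lambda>t. ennreal (h t)) \<in> borel_measurable lborel"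
    using hm by (simp add: measurable_cong_sets[OF sets_lborel refl])
  have Smu: "sets \<mu> = sets borel" by (simp add: \<mu>_def)
  have spmu: "space \<mu> = UNIV" by (simp add: \<mu>_def)
  have Pmu: "prob_space \<mu>"
  proof (rule prob_spaceI)
    show "emeasure \<mu> (space \<mu>) = 1"
      unfolding \<mu>_def using hm' h1 by (simp add: emeasure_density)
  qed
  interpret Pm: prob_space \<mu> by (rule Pmu)
  have PPM: "prob_space PM" unfolding PM_def by (intro prob_space_PiM Pmu)
  interpret PP: prob_space PM by (rule PPM)
  have finR: "finite R" "R \<noteq> {}" using ne by (auto simp: R_def)
  define a' where "a' = \<alpha> (k * eps)"
  define B where "B = \<beta> (l * eps)"
  have a'pos: "a' > 0" using assms(2,5,6) by (simp add: a'_def)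
  have Bpos: "B > 0" using assms(3,5,7) by (simp add: B_def)
  have keps: "k * eps > 0" "l * eps > 0" using assms(5,6,7) by auto
  have adm: "\<And>e \<Delta> lam A. e > 0 \<Longrightarrow> \<bar>\<Delta>\<bar> \<le> \<alpha> e \<Longrightarrow> \<bar>lam\<bar> \<le> \<beta> e \<Longrightarrow> A \<in> sets borel \<Longrightarrow>
        measure \<mu> A \<le> exp (e/2) * measure \<mu> ((\<lambda>s. s + \<Delta>) ` A) \<and>
        measure \<mu> A \<le> exp (e/2) * measure \<mu> ((\<lambda>s. exp lam * s) ` A)"
    using assms(4) unfolding admissible_def \<mu>_def by blast
  have sub: "\<And>r x y. r \<in> R \<Longrightarrow> neighboring n x y \<Longrightarrow> \<bar>u x r - u y r\<bar> \<le> S x r"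
    and smo: "\<And>r x y. r \<in> R \<Longrightarrow> neighboring n x y \<Longrightarrow> S x r \<le> exp B * S y r"
    using assms(11) unfolding smooth_upper_bound_def R_def B_def by blast+
  have nbsym: "neighboring n y x" if "neighboring n x y" for x y :: "'d list"
  proof -
    have "{i. i < length y \<and> y ! i \<noteq> x ! i} = {i. i < length x \<and> x ! i \<noteq> y ! i}"
      using that by (auto simp: neighboring_def)
    then show ?thesis using that by (auto simp: neighboring_def hamming_def)
  qed
  have dA: "emeasure \<mu> A \<le> ennreal (exp (k * eps / 2)) * emeasure \<mu> {s. s - a' \<in> A}"
    if A: "A \<in> sets borel" for A
  proof -
    have "measure \<mu> A \<le> exp (k * eps / 2) * measure \<mu> ((\<lambda>s. s + a') ` A)"
    proof -
      have "\<beta> (k * eps) > 0" using assms(3) keps(1) by simp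
      then show ?thesis using adm[OF keps(1) _ _ A, of a' 0] a'pos by (simp add: a'_def)
    qed
    also have "(\<lambda>s. s + a') ` A = {s. s - a' \<in> A}"
      by (auto simp: image_iff) (metis diff_add_cancel)
    finally have "measure \<mu> A \<le> exp (k * eps / 2) * measure \<mu> {s. s - a' \<in> A}" .
    then show ?thesis
      by (simp add: Pm.emeasure_eq_measure ennreal_mult[symmetric])
  qed
  show ?thesis unfolding differentially_private_def
  proof (intro allI impI)
    fix x y :: "'d list" and T :: "'r set"
    assume nb: "neighboring n x y"
    have nb': "neighboring n y x" using nbsym[OF nb] .
    have lx: "length x = n" "length y = n" using nb by (auto simp: neighboring_def)
    define Sx where "Sx = Max (S x ` R)"
    define Sy where "Sy = Max (S y ` R)"
    have Sxge: "S x r \<le> Sx" if "r \<in> R" for r using finR that by (auto simp: Sx_def)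
    have Syge: "S y r \<le> Sy" if "r \<in> R" for r using finR that by (auto simp: Sy_def)
    obtain r0 where r0: "r0 \<in> R" using finR by auto
    have Sxpos: "Sx > 0" using Sxge[OF r0] assms(10) lx r0 by (force simp: R_def)
    have Sypos: "Sy > 0" using Syge[OF r0] assms(10) lx r0 by (force simp: R_def)
    have "S x r \<le> exp B * Sy" if "r \<in> R" for r
    proof -
      have "S x r \<le> exp B * S y r" using smo[OF that nb] .
      also have "\<dots> \<le> exp B * Sy" using Syge[OF that] by (intro mult_left_mono) auto
      finally show ?thesis .
    qed
    then have SxSy: "Sx \<le> exp B * Sy"
      unfolding Sx_def using finR by (subst Max_le_iff) auto
    have "S y r \<le> exp B * Sx" if "r \<in> R" for r
    proof -
      have "S y r \<le> exp B * S x r" using smo[OF that nb'] .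
      also have "\<dots> \<le> exp B * Sx" using Sxge[OF that] by (intro mult_left_mono) auto
      finally show ?thesis .
    qed
    then have SySx: "Sy \<le> exp B * Sx"
      unfolding Sy_def using finR by (subst Max_le_iff) auto
    define cx where "cx = Sx / a'"
    define cy where "cy = Sy / a'"
    have cxpos: "cx > 0" "cy > 0" using Sxpos Sypos a'pos by (auto simp: cx_def cy_def)
    define a where "a r = u x r / cx" for r
    define b where "b r = u y r / cx" for r
    define \<rho> where "\<rho> = cy / cx"
    define g where "g s = \<rho> * s" for s :: real
    have selx: "sps_select u S rs a' x z = Fsel rs a z" for z
    proof -
      have "sps_select u S rs a' x z = Fsel rs a (\<lambda>r. cx / cx * z r)"
        unfolding sps_select_def Let_def a_def
        using Fsel_scale[OF cxpos(1), of rs "u x" cx z] by (simp add: cx_def Sx_def R_def)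
      then show ?thesis using cxpos by simp
    qed
    have sely: "sps_select u S rs a' y z = Fsel rs b (compose R g z)" for z
    proof -
      have "sps_select u S rs a' y z = Fsel rs b (\<lambda>r. cy / cx * z r)"
        unfolding sps_select_def Let_def b_def
        using Fsel_scale[OF cxpos(1), of rs "u y" cy z] by (simp add: cy_def Sy_def R_def)
      also have "\<dots> = Fsel rs b (compose R g z)"
        by (rule Fsel_cong) (simp add: compose_def R_def g_def \<rho>_def)
      finally show ?thesis .
    qed
    define E where "E v = {z \<in> space PM. Fsel rs v z \<in> T}" for v
    have Ex: "{z \<in> space PM. sps_select u S rs a' x z \<in> T} = E a"
      by (simp add: E_def selx)
    have cspace: "compose R g z \<in> space PM" for z
      by (simp add: PM_def space_PiM spmu compose_def)
    have Ey: "{z \<in> space PM. sps_select u S rs a' y z \<in> T} = {z \<in> space PM. compose R g z \<in> E b}"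
      using cspace by (auto simp: E_def sely)
    have ab: "\<bar>a j - b j\<bar> \<le> a'" if "j \<in> set rs" for j
    proof -
      have jR: "j \<in> R" using that by (simp add: R_def)
      have "\<bar>a j - b j\<bar> = \<bar>u x j - u y j\<bar> / cx"
        using cxpos by (simp add: a_def b_def diff_divide_distrib[symmetric])
      also have "\<dots> \<le> Sx / cx"
        using sub[OF jR nb] Sxge[OF jR] cxpos by (intro divide_right_mono) auto
      also have "\<dots> = a'" using Sxpos a'pos by (simp add: cx_def)
      finally show ?thesis .
    qed
    have stepA: "emeasure PM (E a) \<le> ennreal (exp (k * eps / 2))^2 * emeasure PM (E b)"
      unfolding E_def PM_def R_def
      by (rule shift_T[OF Pmu Smu _ ne ab]) (rule dA)
    define lam where "lam = ln (Sx / Sy)"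
    have lamB: "\<bar>lam\<bar> \<le> B"
    proof -
      have q: "Sx / Sy > 0" using Sxpos Sypos by simp
      have "Sx / Sy \<le> exp B" using SxSy Sypos by (simp add: divide_le_eq mult.commute)
      then have u1: "lam \<le> B" unfolding lam_def using q
        by (metis exp_gt_zero ln_exp ln_le_cancel_iff)
      have "exp (- B) \<le> Sx / Sy" using SySx Sypos Sxpos
        by (simp add: exp_minus field_simps mult.commute)
      then have u2: "- B \<le> lam" unfolding lam_def using q
        by (metis exp_gt_zero ln_exp ln_le_cancel_iff)
      show ?thesis using u1 u2 by simp
    qed
    have elam: "exp lam = Sx / Sy" unfolding lam_def using Sxpos Sypos by simp
    have gm: "g \<in> borel_measurable borel" unfolding g_def by simp
    have dB: "emeasure \<mu> A \<le> ennreal (exp (l * eps / 2)) * emeasure \<mu> (g -` A)"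
      if A: "A \<in> sets borel" for A
    proof -
      have "measure \<mu> A \<le> exp (l * eps / 2) * measure \<mu> ((\<lambda>s. exp lam * s) ` A)"
      proof -
        have "\<alpha> (l * eps) > 0" using assms(2) keps(2) by simp
        then show ?thesis using adm[OF keps(2) _ _ A, of 0 lam] lamB by (simp add: B_def)
      qed
      also have "(\<lambda>s. exp lam * s) ` A = g -` A"
      proof -
        have rq: "\<rho> * (Sx / Sy) = 1" "(Sx / Sy) * \<rho> = 1"
          using Sxpos Sypos a'pos by (auto simp: \<rho>_def cx_def cy_def field_simps)
        show ?thesis
        proof (intro set_eqI iffI)
          fix s assume "s \<in> (\<lambda>s. exp lam * s) ` A"
          then obtain t where t: "t \<in> A" "s = Sx / Sy * t" using elam by auto
          then have "g s = (\<rho> * (Sx / Sy)) * t" by (simp only: g_def mult.assoc)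
          then have "g s = t" by (simp only: rq(1) mult_1_left)
          then show "s \<in> g -` A" using t by simp
        next
          fix s assume "s \<in> g -` A"
          then have "\<rho> * s \<in> A" by (simp add: g_def)
          moreover have "s = Sx / Sy * (\<rho> * s)" by (simp only: mult.assoc[symmetric] rq(2) mult_1_left)
          ultimately show "s \<in> (\<lambda>s. exp lam * s) ` A" using elam by (auto simp: image_iff)
        qed
      qed
      finally have "measure \<mu> A \<le> exp (l * eps / 2) * measure \<mu> (g -` A)" .
      then show ?thesis
        by (simp add: Pm.emeasure_eq_measure ennreal_mult[symmetric])
    qed
    have Ebm: "E b \<in> sets PM"
      unfolding E_def PM_def R_def by (rule Fsel_T_meas[OF Smu ne])
    have stepB: "emeasure PM (E b) \<le> ennreal (exp (l * eps / 2)) ^ card R *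
        emeasure PM {z \<in> space PM. compose R g z \<in> E b}"
      unfolding PM_def by (rule scale_dom[OF Pmu Smu gm dB finR(1)]) (use Ebm in \<open>unfold PM_def\<close>)
    have cardR: "card R = length rs" using assms(8) by (simp add: R_def distinct_card)
    let ?mx = "measure PM {z \<in> space PM. sps_select u S rs a' x z \<in> T}"
    let ?my = "measure PM {z \<in> space PM. sps_select u S rs a' y z \<in> T}"
    have "ennreal ?mx \<le> ennreal (exp (k * eps / 2))^2 * (ennreal (exp (l * eps / 2)) ^ length rs * ennreal ?my)"
      using stepA stepB Ex Ey cardR
      by (metis (no_types, lifting) PP.emeasure_eq_measure mult_left_mono order_trans zero_le)
    also have "\<dots> = ennreal (exp (k * eps / 2)^2 * (exp (l * eps / 2) ^ length rs * ?my))"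
      by (simp add: ennreal_power ennreal_mult)
    finally have "?mx \<le> exp (k * eps / 2)^2 * (exp (l * eps / 2) ^ length rs * ?my)"
      by (simp add: ennreal_le_iff)
    also have "exp (k * eps / 2)^2 * (exp (l * eps / 2) ^ length rs * ?my) =
               exp ((k + real (length rs) / 2 * l) * eps) * ?my"
    proof -
      have "exp (k * eps / 2)^2 = exp (k * eps)"
        by (simp add: power2_eq_square exp_add[symmetric])
      moreover have "exp (l * eps / 2) ^ length rs = exp (real (length rs) * (l * eps / 2))"
        by (rule exp_of_nat_mult[symmetric])
      moreover have "(k + real (length rs) / 2 * l) * eps = k * eps + real (length rs) * (l * eps / 2)"
        by (simp add: algebra_simps)
      ultimately show ?thesis by (simp add: exp_add)
    qed
    finally show "sps_prob h u S rs (\<alpha> (k * eps)) x T \<le>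
        exp ((k + real (length rs) / 2 * l) * eps) * sps_prob h u S rs (\<alpha> (k * eps)) y T"
      by (simp add: sps_prob_def Let_def PM_def R_def \<mu>_def a'_def)
  qed
qed

end
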